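(* Let $G$ be a $2P_3$-free graph. Then $ct_{\gamma_{t2}}(G)\le 1$ (i.e. $G$ is a yes-instance of \textsc{1-Edge Contraction($\gamma_{t2}$)}) if and only if $G$ has a minimum semitotal dominating set that is not independent (i.e. $G$ is a no-instance of \textsc{All Independent MSD}).
   Context: All graphs are finite, simple and connected. A semitotal dominating set of $G$ is a set $D\subseteq V(G)$ such that every vertex outside $D$ has a neighbour in $D$ and every vertex of $D$ is at distance at most two from another vertex of $D$; $\gamma_{t2}(G)$ is its minimum size and a minimum semitotal dominating set is one of that size. $ct_{\gamma_{t2}}(G)$ is the smallest $k$ such that contracting some $k$ edges of $G$ (contracting $uv$ replaces $u,v$ by one vertex adjacent to all neighbours of $u$ or $v$) yields $G'$ with $\gamma_{t2}(G')<\gamma_{t2}(G)$. \textsc{All Independent MSD}: given $G$, decide whether every minimum semitotal dominating set of $G$ is independent. $2P_3$ is the disjoint union of two paths on three vertices. *)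

theory Defs
  imports Main
begin

definition graph :: "'a set \<Rightarrow> ('a \<Rightarrow> 'a \<Rightarrow> bool) \<Rightarrow> bool" where
  "graph V E \<longleftrightarrow> finite V \<and> V \<noteq> {} \<and> (\<forall>x y. E x y \<longrightarrow> x \<in> V \<and> y \<in> V)
     \<and> (\<forall>x y. E x y \<longrightarrow> E y x) \<and> (\<forall>x. \<not> E x x)"

definition connected_graph :: "'a set \<Rightarrow> ('a \<Rightarrow> 'a \<Rightarrow> bool) \<Rightarrow> bool" where
  "connected_graph V E \<longleftrightarrow> graph V E \<and> (\<forall>x\<in>V. \<forall>y\<in>V. E\<^sup>*\<^sup>* x y)"

definition within_two :: "'a set \<Rightarrow> ('a \<Rightarrow> 'a \<Rightarrow> bool) \<Rightarrow> 'a \<Rightarrow> 'a \<Rightarrow> bool" where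
  "within_two V E x y \<longleftrightarrow> x \<noteq> y \<and> (E x y \<or> (\<exists>w\<in>V. E x w \<and> E w y))"

definition semitotal_dom :: "'a set \<Rightarrow> ('a \<Rightarrow> 'a \<Rightarrow> bool) \<Rightarrow> 'a set \<Rightarrow> bool" where
  "semitotal_dom V E D \<longleftrightarrow> D \<subseteq> V
     \<and> (\<forall>x\<in>V - D. \<exists>y\<in>D. E x y)
     \<and> (\<forall>x\<in>D. \<exists>y\<in>D. within_two V E x y)"

definition gamma_t2 :: "'a set \<Rightarrow> ('a \<Rightarrow> 'a \<Rightarrow> bool) \<Rightarrow> nat" where
  "gamma_t2 V E = (LEAST k. \<exists>D. semitotal_dom V E D \<and> card D = k)"

definition min_sds :: "'a set \<Rightarrow> ('a \<Rightarrow> 'a \<Rightarrow> bool) \<Rightarrow> 'a set \<Rightarrow> bool" where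
  "min_sds V E D \<longleftrightarrow> semitotal_dom V E D \<and> card D = gamma_t2 V E"

definition independent :: "('a \<Rightarrow> 'a \<Rightarrow> bool) \<Rightarrow> 'a set \<Rightarrow> bool" where
  "independent E D \<longleftrightarrow> (\<forall>x\<in>D. \<forall>y\<in>D. \<not> E x y)"

text \<open>Contraction of the edge uv: v is merged into u (the merged vertex is named u).\<close>
definition contract_V :: "'a set \<Rightarrow> 'a \<Rightarrow> 'a \<Rightarrow> 'a set" where
  "contract_V V u v = V - {v}"

definition contract_E :: "'a set \<Rightarrow> ('a \<Rightarrow> 'a \<Rightarrow> bool) \<Rightarrow> 'a \<Rightarrow> 'a \<Rightarrow> 'a \<Rightarrow> 'a \<Rightarrow> bool" where
  "contract_E V E u v x y \<longleftrightarrow> x \<in> V - {v} \<and> y \<in> V - {v} \<and> x \<noteq> y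
     \<and> (E x y \<or> (x = u \<and> E v y) \<or> (y = u \<and> E x v))"

text \<open>ct_{gamma_t2}(G) \<le> 1: some single edge contraction decreases gamma_t2
  (contracting 0 edges never does).\<close>
definition ct_gamma_t2_le_1 :: "'a set \<Rightarrow> ('a \<Rightarrow> 'a \<Rightarrow> bool) \<Rightarrow> bool" where
  "ct_gamma_t2_le_1 V E \<longleftrightarrow> (\<exists>u\<in>V. \<exists>v\<in>V. E u v \<and>
     gamma_t2 (contract_V V u v) (contract_E V E u v) < gamma_t2 V E)"

definition induced_P3 :: "('a \<Rightarrow> 'a \<Rightarrow> bool) \<Rightarrow> 'a \<Rightarrow> 'a \<Rightarrow> 'a \<Rightarrow> bool" where
  "induced_P3 E a b c \<longleftrightarrow> distinct [a, b, c] \<and> E a b \<and> E b c \<and> \<not> E a c"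

definition free_2P3 :: "'a set \<Rightarrow> ('a \<Rightarrow> 'a \<Rightarrow> bool) \<Rightarrow> bool" where
  "free_2P3 V E \<longleftrightarrow> \<not> (\<exists>a1\<in>V. \<exists>b1\<in>V. \<exists>c1\<in>V. \<exists>a2\<in>V. \<exists>b2\<in>V. \<exists>c2\<in>V.
     distinct [a1, b1, c1, a2, b2, c2] \<and> induced_P3 E a1 b1 c1 \<and> induced_P3 E a2 b2 c2
     \<and> (\<forall>x\<in>{a1, b1, c1}. \<forall>y\<in>{a2, b2, c2}. \<not> E x y))"

end

theory Submission imports Defs begin

lemma graphD:
  assumes "graph V E"
  shows "finite V" "E x y \<Longrightarrow> x \<in> V" "E x y \<Longrightarrow> y \<in> V" "E x y \<Longrightarrow> E y x" "\<not> E x x"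
  using assms unfolding graph_def by blast+

lemma w2_sym: "graph V E \<Longrightarrow> within_two V E x y \<Longrightarrow> within_two V E y x"
  unfolding within_two_def graph_def by blast

lemma leaving_edge:
  assumes "E\<^sup>*\<^sup>* x y" "P x" "\<not> P y"
  shows "\<exists>a b. P a \<and> \<not> P b \<and> E a b"
  using assms
proof (induction rule: rtranclp_induct)
  case base then show ?case by simp
next
  case (step y z)
  then show ?case by (cases "P y") auto
qed

lemma gamma_le: "semitotal_dom V E D \<Longrightarrow> gamma_t2 V E \<le> card D"
  unfolding gamma_t2_def by (rule Least_le) auto

lemma gamma_ex: "semitotal_dom V E D \<Longrightarrow> \<exists>D'. semitotal_dom V E D' \<and> card D' = gamma_t2 V E"
  unfolding gamma_t2_def by (rule LeastI_ex) auto

lemma cE_map: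
  assumes g: "graph V E" and ab: "E a b" and xy: "E x y"
    and ne: "(if x = b then a else x) \<noteq> (if y = b then a else y)"
  shows "contract_E V E a b (if x = b then a else x) (if y = b then a else y)"
proof -
  have "x \<in> V" "y \<in> V" "a \<in> V" "b \<in> V" "E y x" "E b a" "x \<noteq> y" "a \<noteq> b"
    using graphD[OF g] ab xy by metis+
  then show ?thesis using ab xy ne unfolding contract_E_def by (cases "x = b"; cases "y = b") auto
qed

lemma w2_map:
  assumes g: "graph V E" and ab: "E a b" and xy: "within_two V E x y"
    and ne: "(if x = b then a else x) \<noteq> (if y = b then a else y)"
  shows "within_two (V - {b}) (contract_E V E a b) (if x = b then a else x) (if y = b then a else y)"
proof -
  define f where "f t = (if t = b then a else t)" for t
  have ne': "f x \<noteq> f y" using ne unfolding f_def .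
  have cm: "E s t \<Longrightarrow> f s \<noteq> f t \<Longrightarrow> contract_E V E a b (f s) (f t)" for s t
    unfolding f_def by (rule cE_map[OF g ab])
  have ab': "a \<noteq> b" using g ab graphD(5) by metis
  have aV: "a \<in> V - {b}" using graphD(2)[OF g ab] ab' by blast
  have fV: "f t \<in> V - {b}" if "t \<in> V" for t using that aV unfolding f_def by auto
  have "within_two (V - {b}) (contract_E V E a b) (f x) (f y)"
  proof (cases "E x y")
    case True
    then show ?thesis using cm[OF True ne'] ne' unfolding within_two_def by blast
  next
    case False
    then obtain w where w: "w \<in> V" "E x w" "E w y" using xy unfolding within_two_def by blast
    show ?thesis
    proof (cases "f w = f x")
      case True
      then have "f w \<noteq> f y" using ne' by simp
      then have "contract_E V E a b (f w) (f y)" by (rule cm[OF w(3)])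
      then show ?thesis using ne' True unfolding within_two_def by simp
    next
      case c1: False
      show ?thesis
      proof (cases "f w = f y")
        case True
        have "contract_E V E a b (f x) (f w)" using cm[OF w(2)] c1 by simp
        then show ?thesis using ne' True unfolding within_two_def by simp
      next
        case False
        have "contract_E V E a b (f x) (f w)" using cm[OF w(2)] c1 by simp
        moreover have "contract_E V E a b (f w) (f y)" using cm[OF w(3)] False by simp
        ultimately show ?thesis using ne' fV[OF w(1)] unfolding within_two_def by blast
      qed
    qed
  qed
  then show ?thesis unfolding f_def .
qed

lemma caseA_ct:
  assumes g: "graph V E" and sd: "semitotal_dom V E D" and cd: "card D = gamma_t2 V E"
    and aD: "a \<in> D" and bD: "b \<in> D" and cD: "c \<in> D" and ab: "E a b"
    and ca: "c \<noteq> a" and cb: "c \<noteq> b"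
    and w: "within_two V E a c \<or> within_two V E b c"
  shows "ct_gamma_t2_le_1 V E"
proof -
  define f where "f t = (if t = b then a else t)" for t
  have cm: "E s t \<Longrightarrow> f s \<noteq> f t \<Longrightarrow> contract_E V E a b (f s) (f t)" for s t
    unfolding f_def by (rule cE_map[OF g ab])
  have wm: "within_two V E s t \<Longrightarrow> f s \<noteq> f t \<Longrightarrow> within_two (V - {b}) (contract_E V E a b) (f s) (f t)" for s t
    unfolding f_def by (rule w2_map[OF g ab])
  have ab': "a \<noteq> b" using g ab graphD(5) by metis
  have DV: "D \<subseteq> V" using sd unfolding semitotal_dom_def by blast
  have finD: "finite D" using DV graphD(1)[OF g] finite_subset by blast
  have fD: "f t \<in> D - {b}" if "t \<in> D" for t using that aD ab' unfolding f_def by auto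
  have sd': "semitotal_dom (V - {b}) (contract_E V E a b) (D - {b})"
    unfolding semitotal_dom_def
  proof (intro conjI ballI)
    show "D - {b} \<subseteq> V - {b}" using DV by blast
  next
    fix x assume x: "x \<in> V - {b} - (D - {b})"
    then obtain d where d: "d \<in> D" "E x d" using sd unfolding semitotal_dom_def by blast
    have fx: "f x = x" using x unfolding f_def by auto
    have "f x \<noteq> f d" using fD[OF d(1)] x fx by auto
    then have "contract_E V E a b (f x) (f d)" using cm[OF d(2)] by simp
    then show "\<exists>y\<in>D - {b}. contract_E V E a b x y" using fD[OF d(1)] fx by auto
  next
    fix x assume x: "x \<in> D - {b}"
    have fx: "f x = x" using x unfolding f_def by auto
    show "\<exists>y\<in>D - {b}. within_two (V - {b}) (contract_E V E a b) x y"
    proof (cases "x = a")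
      case True
      have fa: "f a = a" "f b = a" "f c = c" using ab' cb unfolding f_def by auto
      have "within_two (V - {b}) (contract_E V E a b) a c"
        using w wm[of a c] wm[of b c] fa ca by force
      then show ?thesis using True cD cb by blast
    next
      case False
      obtain y where y: "y \<in> D" "within_two V E x y" using sd x unfolding semitotal_dom_def by blast
      have "x \<noteq> y" using y(2) unfolding within_two_def by blast
      then have "f x \<noteq> f y" using False fx unfolding f_def by auto
      then have "within_two (V - {b}) (contract_E V E a b) (f x) (f y)" using wm[OF y(2)] by simp
      then show ?thesis using fD[OF y(1)] fx by auto
    qed
  qed
  have "gamma_t2 (V - {b}) (contract_E V E a b) \<le> card (D - {b})" by (rule gamma_le[OF sd'])
  also have "\<dots> < card D" using finD bD by (rule card_Diff1_less)
  finally have "gamma_t2 (contract_V V a b) (contract_E V E a b) < gamma_t2 V E"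
    using cd unfolding contract_V_def by simp
  moreover have "a \<in> V" "b \<in> V" using aD bD DV by auto
  ultimately show ?thesis unfolding ct_gamma_t2_le_1_def using ab by blast
qed

lemma L1:
  assumes g: "graph V E" and w: "within_two (V - {b}) (contract_E V E a b) x y"
    and xa: "x \<noteq> a" and ya: "y \<noteq> a"
  shows "within_two V E x y \<or> E x a \<or> E x b"
  using w xa ya unfolding within_two_def contract_E_def by blast

lemma L2:
  assumes g: "graph V E" and w: "within_two (V - {b}) (contract_E V E a b) x y"
    and xa: "x \<noteq> a"
  shows "within_two V E x y \<or> within_two V E x a \<or> within_two V E x b \<or> E x a \<or> E x b"
  using w xa unfolding within_two_def contract_E_def by blast

lemma ct_imp:
  assumes conn: "connected_graph V E" and g3: "gamma_t2 V E \<ge> 3" and ct: "ct_gamma_t2_le_1 V E"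
  shows "\<exists>D. min_sds V E D \<and> \<not> independent E D"
proof -
  have g: "graph V E" using conn unfolding connected_graph_def by blast
  have finV: "finite V" using graphD(1)[OF g] .
  obtain a b where aV: "a \<in> V" and bV: "b \<in> V" and ab: "E a b"
    and lt: "gamma_t2 (V - {b}) (contract_E V E a b) < gamma_t2 V E"
    using ct unfolding ct_gamma_t2_le_1_def contract_V_def by blast
  have ab': "a \<noteq> b" using g ab graphD(5) by metis
  have ba: "E b a" using graphD(4)[OF g ab] .
  let ?V' = "V - {b}" and ?E' = "contract_E V E a b"
  have ex3: "\<exists>w\<in>V. w \<noteq> a \<and> w \<noteq> b"
  proof (rule ccontr)
    assume "\<not> ?thesis"
    then have Vab: "V = {a, b}" using aV bV by blast
    have "semitotal_dom V E V" unfolding semitotal_dom_def within_two_def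
      using Vab ab ba ab' by auto
    then have "gamma_t2 V E \<le> card V" by (rule gamma_le)
    also have "\<dots> \<le> 2" using Vab by (simp add: card_insert_le_m1)
    finally show False using g3 by simp
  qed
  have nb: "\<exists>y\<in>?V'. ?E' x y" if x: "x \<in> ?V'" for x
  proof (cases "x = a")
    case True
    obtain w where w: "w \<in> V" "w \<noteq> a" "w \<noteq> b" using ex3 by blast
    have "E\<^sup>*\<^sup>* a w" using conn aV w(1) unfolding connected_graph_def by blast
    then obtain s t where st: "s \<in> {a, b}" "t \<notin> {a, b}" "E s t"
      using leaving_edge[of E a w "\<lambda>z. z \<in> {a, b}"] w by auto
    have "t \<in> V" using graphD(3)[OF g st(3)] .
    then have "?E' a t" using st ab' aV unfolding contract_E_def by auto
    then show ?thesis using True \<open>t \<in> V\<close> st(2) by blast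
  next
    case False
    have "E\<^sup>*\<^sup>* x a" using conn aV x unfolding connected_graph_def by blast
    then obtain s t where st: "s = x" "t \<noteq> x" "E s t"
      using leaving_edge[of E x a "\<lambda>z. z = x"] False by auto
    have tV: "t \<in> V" using graphD(3)[OF g st(3)] .
    show ?thesis
    proof (cases "t = b")
      case True
      have "?E' x a" using x False st True aV ab' unfolding contract_E_def by auto
      then show ?thesis using aV ab' by blast
    next
      case tb: False
      have "?E' x t" using x st tb tV unfolding contract_E_def by auto
      then show ?thesis using tV tb by blast
    qed
  qed
  have "semitotal_dom ?V' ?E' ?V'" unfolding semitotal_dom_def
  proof (intro conjI ballI)
    fix x assume "x \<in> ?V'"
    then obtain y where "y \<in> ?V'" "?E' x y" using nb by blast
    moreover have "x \<noteq> y" using \<open>?E' x y\<close> unfolding contract_E_def by blast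
    ultimately show "\<exists>y\<in>?V'. within_two ?V' ?E' x y" unfolding within_two_def by blast
  qed auto
  then obtain D' where sd': "semitotal_dom ?V' ?E' D'" and cD': "card D' = gamma_t2 ?V' ?E'"
    using gamma_ex by blast
  have D'V: "D' \<subseteq> ?V'" using sd' unfolding semitotal_dom_def by blast
  have finD': "finite D'" using D'V finV finite_subset by blast
  have dom': "\<exists>y\<in>D'. ?E' x y" if "x \<in> ?V'" "x \<notin> D'" for x using sd' that unfolding semitotal_dom_def by blast
  have st': "\<exists>y\<in>D'. within_two ?V' ?E' x y" if "x \<in> D'" for x using sd' that unfolding semitotal_dom_def by blast
  have goal: "\<exists>D. semitotal_dom V E D \<and> card D \<le> card D' + 1 \<and> \<not> independent E D"
  proof (cases "a \<in> D'")
    case True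
    let ?D = "insert b D'"
    have "semitotal_dom V E ?D" unfolding semitotal_dom_def
    proof (intro conjI ballI)
      show "?D \<subseteq> V" using D'V bV by blast
    next
      fix x assume x: "x \<in> V - ?D"
      then obtain d where d: "d \<in> D'" "?E' x d" using dom'[of x] by blast
      have "x \<noteq> a" using x True by blast
      then have "E x d \<or> E x b" using d(2) unfolding contract_E_def by blast
      then show "\<exists>y\<in>?D. E x y" using d(1) by blast
    next
      fix x assume x: "x \<in> ?D"
      show "\<exists>y\<in>?D. within_two V E x y"
      proof (cases "x = b \<or> x = a")
        case True
        then show ?thesis using ab ba ab' \<open>a \<in> D'\<close> unfolding within_two_def by (elim disjE) auto
      next
        case False
        then have xD: "x \<in> D'" using x by blast
        obtain y where y: "y \<in> D'" "within_two ?V' ?E' x y" using st'[OF xD] by blast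
        have "within_two V E x y \<or> within_two V E x a \<or> within_two V E x b \<or> E x a \<or> E x b"
          using L2[OF g y(2)] False by blast
        then show ?thesis using y(1) True False unfolding within_two_def by blast
      qed
    qed
    moreover have "card ?D \<le> card D' + 1" using finD' by (simp add: card_insert_if)
    moreover have "\<not> independent E ?D" using ab True unfolding independent_def by blast
    ultimately show ?thesis by blast
  next
    case False
    have "a \<in> ?V'" using aV ab' by blast
    then obtain d where d: "d \<in> D'" "?E' a d" using dom' False by blast
    have da: "d \<noteq> a" using d False by blast
    have "E a d \<or> E b d" using d(2) da unfolding contract_E_def by blast
    then obtain c where c: "c = a \<or> c = b" "E c d" by blast
    have cD': "c \<notin> D'" using c False D'V by blast
    let ?D = "insert c D'"
    have oth: "E x c" if "x \<in> {a, b}" "x \<noteq> c" for x using that c(1) ab ba by blast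
    have "semitotal_dom V E ?D" unfolding semitotal_dom_def
    proof (intro conjI ballI)
      show "?D \<subseteq> V" using D'V c(1) aV bV by blast
    next
      fix x assume x: "x \<in> V - ?D"
      show "\<exists>y\<in>?D. E x y"
      proof (cases "x \<in> {a, b}")
        case True
        then show ?thesis using oth[of x] x by blast
      next
        case xab: False
        then obtain d0 where d0: "d0 \<in> D'" "?E' x d0" using dom'[of x] x by blast
        have "d0 \<noteq> a" using d0 False by blast
        then have "E x d0" using d0(2) xab unfolding contract_E_def by blast
        then show ?thesis using d0(1) by blast
      qed
    next
      fix x assume x: "x \<in> ?D"
      show "\<exists>y\<in>?D. within_two V E x y"
      proof (cases "x = c")
        case True
        have "c \<noteq> d" using cD' d(1) by blast
        then show ?thesis using True c(2) d(1) unfolding within_two_def by blast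
      next
        case xc: False
        then have xD: "x \<in> D'" using x by blast
        obtain y where y: "y \<in> D'" "within_two ?V' ?E' x y" using st'[OF xD] by blast
        have "x \<noteq> a" "y \<noteq> a" using xD y(1) False by blast+
        then have h: "within_two V E x y \<or> E x a \<or> E x b" using L1[OF g y(2)] by blast
        have xb: "x \<noteq> b" using xD D'V by blast
        have "within_two V E x c"
          if "E x a \<or> E x b"
        proof -
          from that obtain oo where oo: "oo \<in> {a, b}" "E x oo" by blast
          show ?thesis
          proof (cases "oo = c")
            case True then show ?thesis using oo xc unfolding within_two_def by blast
          next
            case False
            have "E oo c" using oth[OF oo(1) False] .
            moreover have "oo \<in> V" using oo(1) aV bV by blast
            ultimately show ?thesis using oo(2) xc unfolding within_two_def by blast
          qed
        qed
        then show ?thesis using h y(1) by blast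
      qed
    qed
    moreover have "card ?D \<le> card D' + 1" using finD' by (simp add: card_insert_if)
    moreover have "\<not> independent E ?D" using c(2) d(1) unfolding independent_def by blast
    ultimately show ?thesis by blast
  qed
  then obtain D where D: "semitotal_dom V E D" "card D \<le> card D' + 1" "\<not> independent E D" by blast
  have "gamma_t2 V E \<le> card D" using gamma_le[OF D(1)] .
  moreover have "card D \<le> gamma_t2 V E" using D(2) cD' lt by simp
  ultimately have "min_sds V E D" using D(1) unfolding min_sds_def by simp
  then show ?thesis using D(3) by blast
qed

definition goodD :: "'a set \<Rightarrow> ('a \<Rightarrow> 'a \<Rightarrow> bool) \<Rightarrow> 'a set \<Rightarrow> bool" where
  "goodD V E D \<longleftrightarrow> semitotal_dom V E D \<and> (\<exists>a\<in>D. \<exists>b\<in>D. \<exists>c\<in>D. E a b \<and> c \<noteq> a \<and> c \<noteq> b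
     \<and> (within_two V E a c \<or> within_two V E b c))"

lemma swap:
  assumes sd: "semitotal_dom V E D" and finD: "finite D" and x0: "x0 \<in> D" and mV: "m \<in> V" and mD: "m \<notin> D"
    and i: "\<forall>w\<in>V - D. w \<noteq> m \<longrightarrow> E w x0 \<longrightarrow> (\<exists>d\<in>D - {x0}. E w d) \<or> E w m"
    and ii: "(\<exists>d\<in>D - {x0}. E x0 d) \<or> E x0 m"
    and iii: "\<forall>x\<in>D - {x0}. \<exists>y\<in>insert m (D - {x0}). within_two V E x y"
    and iv: "\<exists>y\<in>D - {x0}. within_two V E m y"
  shows "semitotal_dom V E (insert m (D - {x0})) \<and> card (insert m (D - {x0})) = card D"
proof
  show "card (insert m (D - {x0})) = card D"
    using finD x0 mD by (simp add: card_Diff1_less) (metis Suc_pred card_gt_0_iff empty_iff)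
  show "semitotal_dom V E (insert m (D - {x0}))" unfolding semitotal_dom_def
  proof (intro conjI ballI)
    show "insert m (D - {x0}) \<subseteq> V" using sd mV unfolding semitotal_dom_def by blast
  next
    fix x assume x: "x \<in> V - insert m (D - {x0})"
    show "\<exists>y\<in>insert m (D - {x0}). E x y"
    proof (cases "x = x0")
      case True then show ?thesis using ii by blast
    next
      case False
      then have "x \<in> V - D" using x by blast
      then obtain d where d: "d \<in> D" "E x d" using sd unfolding semitotal_dom_def by blast
      show ?thesis
      proof (cases "d = x0")
        case True
        then show ?thesis using i \<open>x \<in> V - D\<close> x d by blast
      next
        case False then show ?thesis using d by blast
      qed
    qed
  next
    fix x assume x: "x \<in> insert m (D - {x0})"
    show "\<exists>y\<in>insert m (D - {x0}). within_two V E x y"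
      using x iii iv by blast
  qed
qed

lemma force:
  assumes free: "free_2P3 V E" and inV: "a1 \<in> V" "b1 \<in> V" "c1 \<in> V" "a2 \<in> V" "b2 \<in> V" "c2 \<in> V"
    and dist: "distinct [a1, b1, c1, a2, b2, c2]"
    and p1: "induced_P3 E a1 b1 c1" and p2: "induced_P3 E a2 b2 c2"
    and na: "\<forall>x\<in>{a1, b1, c1}. \<forall>y\<in>{a2, b2, c2}. (x, y) \<noteq> (a1, t) \<longrightarrow> \<not> E x y"
  shows "E a1 t"
proof (rule ccontr)
  assume "\<not> E a1 t"
  then have "\<forall>x\<in>{a1, b1, c1}. \<forall>y\<in>{a2, b2, c2}. \<not> E x y" using na by auto
  then show False using free inV dist p1 p2 unfolding free_2P3_def by blast
qed

lemma near_force: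
  assumes g: "graph V E" and free: "free_2P3 V E" and ya: "E y a" and ab: "E a b" and yb: "y \<noteq> b" "\<not> E y b"
    and sV: "s1 \<in> V" "s2 \<in> V" "s3 \<in> V" and sd: "distinct [s1, s2, s3]" and sp: "induced_P3 E s1 s2 s3"
    and t: "t \<in> {s1, s2, s3}"
    and hs: "\<forall>s\<in>{s1, s2, s3}. \<not> E s a \<and> \<not> E s b \<and> s \<noteq> a \<and> s \<noteq> b"
    and ht: "\<forall>s\<in>{s1, s2, s3}. s \<noteq> t \<longrightarrow> \<not> E y s"
  shows "E y t"
proof (rule force[OF free _ _ _ sV _ _ sp])
  show "y \<in> V" "a \<in> V" "b \<in> V" using graphD[OF g] ya ab by blast+
  have "y \<noteq> a" "a \<noteq> b" using graphD(5)[OF g] ya ab by metis+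
  moreover have "y \<noteq> s1" "y \<noteq> s2" "y \<noteq> s3" using hs ya by auto
  ultimately show "distinct [y, a, b, s1, s2, s3]" using sd hs yb by auto
  then show "induced_P3 E y a b" using ya ab yb unfolding induced_P3_def by auto
  have "\<not> E x s" if "x \<in> {a, b}" "s \<in> {s1, s2, s3}" for x s
    using that hs graphD(4)[OF g] by blast
  then show "\<forall>x\<in>{y, a, b}. \<forall>s\<in>{s1, s2, s3}. (x, s) \<noteq> (y, t) \<longrightarrow> \<not> E x s"
    using ht by auto
qed

context
  fixes V :: "'a set" and E :: "'a \<Rightarrow> 'a \<Rightarrow> bool" and D :: "'a set" and u v :: 'a
  assumes g: "graph V E" and sd: "semitotal_dom V E D" and finD: "finite D"
    and uD: "u \<in> D" and vD: "v \<in> D" and uv: "E u v"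
    and cb: "\<forall>r\<in>D. r \<noteq> u \<longrightarrow> r \<noteq> v \<longrightarrow> \<not> within_two V E u r \<and> \<not> within_two V E v r"
begin

lemma vu: "E v u" using graphD(4)[OF g uv] .
lemma u_ne_v: "u \<noteq> v" using graphD(5)[OF g] uv by metis
lemma DV: "D \<subseteq> V" using sd unfolding semitotal_dom_def by blast
lemma eV: "E x y \<Longrightarrow> x \<in> V" "E x y \<Longrightarrow> y \<in> V" using graphD(2,3)[OF g] by auto
lemma esym: "E x y \<Longrightarrow> E y x" using graphD(4)[OF g] by blast
lemma irr: "E x y \<Longrightarrow> x \<noteq> y" using graphD(5)[OF g] by metis

lemma R_facts:
  assumes "r \<in> D" "r \<noteq> u" "r \<noteq> v"
  shows "\<not> E u r" "\<not> E r u" "\<not> E v r" "\<not> E r v" "E w r \<Longrightarrow> \<not> E w u" "E w r \<Longrightarrow> \<not> E w v"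
proof -
  have a: "\<not> within_two V E u r" "\<not> within_two V E v r" using cb assms by blast+
  show "\<not> E u r" "\<not> E v r" using a assms unfolding within_two_def by blast+
  then show "\<not> E r u" "\<not> E r v" using esym by blast+
  show "E w r \<Longrightarrow> \<not> E w u" "E w r \<Longrightarrow> \<not> E w v" using a assms eV esym unfolding within_two_def by blast+
qed

lemma R_partner:
  assumes "r \<in> D" "r \<noteq> u" "r \<noteq> v" "within_two V E r y"
  shows "y \<noteq> u" "y \<noteq> v"
  using cb assms w2_sym[OF g assms(4)] by blast+

lemma C1:
  assumes pq: "E p q" and qz: "E q z" and zD: "z \<in> D" "z \<noteq> u" "z \<noteq> v"
    and pa: "E p u \<or> E p v" and pu': "p \<noteq> u" and pv': "p \<noteq> v"
    and Pv: "\<forall>y. E y v \<longrightarrow> y = u \<or> E y u"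
  shows "\<exists>D'. goodD V E D' \<and> card D' = card D"
proof -
  have pu: "E p u" using pa Pv pu' by blast
  have pD: "p \<notin> D" using R_facts(2)[of p] pu pu' pv' by blast
  have pV: "p \<in> V" using eV pu by blast
  have qV: "q \<in> V" using eV pq by blast
  have sw: "semitotal_dom V E (insert p (D - {v})) \<and> card (insert p (D - {v})) = card D"
  proof (rule swap[OF sd finD vD pV pD])
    show "\<forall>w\<in>V - D. w \<noteq> p \<longrightarrow> E w v \<longrightarrow> (\<exists>d\<in>D - {v}. E w d) \<or> E w p"
      using Pv uD u_ne_v by blast
    show "(\<exists>d\<in>D - {v}. E v d) \<or> E v p" using vu uD u_ne_v by blast
    show "\<forall>x\<in>D - {v}. \<exists>y\<in>insert p (D - {v}). within_two V E x y"
    proof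
      fix x assume x: "x \<in> D - {v}"
      show "\<exists>y\<in>insert p (D - {v}). within_two V E x y"
      proof (cases "x = u")
        case True
        then show ?thesis using esym[OF pu] pu' unfolding within_two_def by (intro bexI[of _ p]) auto
      next
        case False
        obtain y where y: "y \<in> D" "within_two V E x y" using sd x unfolding semitotal_dom_def by blast
        have "y \<noteq> v" using R_partner[of x y] x False y by blast
        then show ?thesis using y by blast
      qed
    qed
    show "\<exists>y\<in>D - {v}. within_two V E p y" using pu pu' uD u_ne_v unfolding within_two_def by blast
  qed
  have good: "goodD V E (insert p (D - {v}))" unfolding goodD_def
  proof (intro conjI)
    show "semitotal_dom V E (insert p (D - {v}))" using sw by blast
    have "within_two V E p z" using pq qz qV pD zD unfolding within_two_def by blast
    moreover have "z \<noteq> u" "z \<noteq> p" using zD pD by blast+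
    ultimately show "\<exists>a\<in>insert p (D - {v}). \<exists>b\<in>insert p (D - {v}). \<exists>c\<in>insert p (D - {v}). E a b \<and> c \<noteq> a \<and> c \<noteq> b
     \<and> (within_two V E a c \<or> within_two V E b c)"
      using esym[OF pu] uD u_ne_v zD by blast
  qed
  then show ?thesis using sw by blast
qed

lemma farfin:
  assumes tV: "t \<in> V" and tu: "\<not> E t u" and tv: "\<not> E t v"
    and z1: "z1 \<in> D" "z1 \<noteq> u" "z1 \<noteq> v" and tz: "E t z1"
    and y0: "E y0 v" "y0 \<noteq> u" "\<not> E y0 u" "E y0 t"
    and Pu: "\<forall>y. E y u \<longrightarrow> y \<noteq> v \<longrightarrow> \<not> E y v \<longrightarrow> E y t"
  shows "\<exists>D'. goodD V E D' \<and> card D' = card D"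
proof -
  have tneu: "t \<noteq> u" "t \<noteq> v" using R_facts(5,6)[OF z1 tz] uv vu by blast+
  have vt: "within_two V E v t" using y0 eV tneu esym unfolding within_two_def by blast
  have tD: "t \<notin> D" using cb vt tneu by blast
  have sw: "semitotal_dom V E (insert t (D - {u})) \<and> card (insert t (D - {u})) = card D"
  proof (rule swap[OF sd finD uD tV tD])
    show "\<forall>w\<in>V - D. w \<noteq> t \<longrightarrow> E w u \<longrightarrow> (\<exists>d\<in>D - {u}. E w d) \<or> E w t"
      using Pu vD u_ne_v by blast
    show "(\<exists>d\<in>D - {u}. E u d) \<or> E u t" using uv vD u_ne_v by blast
    show "\<forall>x\<in>D - {u}. \<exists>y\<in>insert t (D - {u}). within_two V E x y"
    proof
      fix x assume x: "x \<in> D - {u}"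
      show "\<exists>y\<in>insert t (D - {u}). within_two V E x y"
      proof (cases "x = v")
        case True
        then show ?thesis using vt by blast
      next
        case False
        obtain y where y: "y \<in> D" "within_two V E x y" using sd x unfolding semitotal_dom_def by blast
        have "y \<noteq> u" using R_partner[of x y] x False y by blast
        then show ?thesis using y by blast
      qed
    qed
    show "\<exists>y\<in>D - {u}. within_two V E t y" using w2_sym[OF g vt] vD u_ne_v by blast
  qed
  have good: "goodD V E (insert t (D - {u}))" unfolding goodD_def
  proof (intro conjI)
    show "semitotal_dom V E (insert t (D - {u}))" using sw by blast
    have "v \<noteq> t" "v \<noteq> z1" using tneu z1 by auto
    moreover have "v \<in> insert t (D - {u})" "z1 \<in> insert t (D - {u})" using vD u_ne_v z1 by auto
    ultimately show "\<exists>a\<in>insert t (D - {u}). \<exists>b\<in>insert t (D - {u}). \<exists>c\<in>insert t (D - {u}). E a b \<and> c \<noteq> a \<and> c \<noteq> b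
     \<and> (within_two V E a c \<or> within_two V E b c)"
      using tz w2_sym[OF g vt] by blast
  qed
  then show ?thesis using sw by blast
qed

lemma sub3:
  assumes aq: "a = u \<or> a = v" and ap: "E a p" and pq: "E p q" and qz: "E q z" and qD: "q \<notin> D"
    and zD: "z \<in> D" "z \<noteq> u" "z \<noteq> v"
    and n1: "\<forall>z1\<in>D - {u, v}. \<forall>z2\<in>D - {u, v}. within_two V E z1 z2 \<longrightarrow> E z1 z2"
    and n2: "\<forall>z1\<in>D - {u, v}. \<forall>z2\<in>D - {u, v}. E z1 z2 \<longrightarrow>
               (\<forall>w\<in>V - D. E w z1 \<longrightarrow> (\<exists>d\<in>D. d \<noteq> z1 \<and> E w d))"
  shows "\<exists>D'. goodD V E D' \<and> card D' = card D"
proof -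
  obtain z' where z': "z' \<in> D" "within_two V E z z'" using sd zD unfolding semitotal_dom_def by blast
  have z'uv: "z' \<noteq> u" "z' \<noteq> v" using R_partner[OF zD z'(2)] by auto
  have zz': "E z z'" using n1 zD z'uv z' by blast
  have zne: "z \<noteq> z'" using irr[OF zz'] .
  have qV: "q \<in> V" using eV pq by blast
  have aD: "a \<in> D" using aq uD vD by blast
  have qa: "q \<noteq> a" using qD aD by blast
  have sw: "semitotal_dom V E (insert q (D - {z'})) \<and> card (insert q (D - {z'})) = card D"
  proof (rule swap[OF sd finD z'(1) qV qD])
    show "\<forall>w\<in>V - D. w \<noteq> q \<longrightarrow> E w z' \<longrightarrow> (\<exists>d\<in>D - {z'}. E w d) \<or> E w q"
      using n2 zD z' z'uv esym[OF zz'] by blast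
    show "(\<exists>d\<in>D - {z'}. E z' d) \<or> E z' q" using esym[OF zz'] zD zne by blast
    show "\<forall>x\<in>D - {z'}. \<exists>y\<in>insert q (D - {z'}). within_two V E x y"
    proof
      fix x assume x: "x \<in> D - {z'}"
      obtain y where y: "y \<in> D" "within_two V E x y" using sd x unfolding semitotal_dom_def by blast
      show "\<exists>y\<in>insert q (D - {z'}). within_two V E x y"
      proof (cases "y = z'")
        case False then show ?thesis using y by blast
      next
        case True
        have xuv: "x \<noteq> u" "x \<noteq> v" using cb x y True z'uv z'(1) by blast+
        show ?thesis
        proof (cases "x = z")
          case True
          have "within_two V E z q" using esym[OF qz] irr[OF qz] unfolding within_two_def by blast
          then show ?thesis using True by blast
        next
          case False
          have "E x z'" using n1 x xuv y True z'uv z'(1) by blast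
          then have "within_two V E x z" using esym[OF zz'] False z'(1) DV unfolding within_two_def by blast
          then show ?thesis using zD zne by blast
        qed
      qed
    qed
    show "\<exists>y\<in>D - {z'}. within_two V E q y" using qz irr[OF qz] zD zne unfolding within_two_def by blast
  qed
  have good: "goodD V E (insert q (D - {z'}))" unfolding goodD_def
  proof (intro conjI)
    show "semitotal_dom V E (insert q (D - {z'}))" using sw by blast
    have "within_two V E q a" using esym[OF pq] esym[OF ap] qa eV ap unfolding within_two_def by blast
    moreover have "a \<noteq> q" "a \<noteq> z" using qa aq zD by auto
    moreover have "a \<in> insert q (D - {z'})" "z \<in> insert q (D - {z'})" using aD aq z'uv zD zne by auto
    ultimately show "\<exists>a\<in>insert q (D - {z'}). \<exists>b\<in>insert q (D - {z'}). \<exists>c\<in>insert q (D - {z'}). E a b \<and> c \<noteq> a \<and> c \<noteq> b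
     \<and> (within_two V E a c \<or> within_two V E b c)"
      using qz by blast
  qed
  then show ?thesis using sw by blast
qed

end

lemma caseB:
  assumes g: "graph V E" and sd: "semitotal_dom V E D" and finD: "finite D"
    and uD: "u \<in> D" and vD: "v \<in> D" and uv: "E u v"
    and cb: "\<forall>r\<in>D. r \<noteq> u \<longrightarrow> r \<noteq> v \<longrightarrow> \<not> within_two V E u r \<and> \<not> within_two V E v r"
    and conn: "\<forall>x\<in>V. \<forall>y\<in>V. E\<^sup>*\<^sup>* x y" and free: "free_2P3 V E"
    and three: "\<exists>r\<in>D. r \<noteq> u \<and> r \<noteq> v"
  shows "\<exists>D'. goodD V E D' \<and> card D' = card D"
proof -
  note ctx = g sd finD uD vD uv cb
  have vu: "E v u" using vu[OF ctx] .
  have cb': "\<forall>r\<in>D. r \<noteq> v \<longrightarrow> r \<noteq> u \<longrightarrow> \<not> within_two V E v r \<and> \<not> within_two V E u r" using cb by blast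
  note ctx' = g sd finD vD uD vu cb'
  note RF = R_facts[OF ctx]
  note es = esym[OF ctx] and ev = eV[OF ctx] and ir = irr[OF ctx]
  obtain r where r: "r \<in> D" "r \<noteq> u" "r \<noteq> v" using three by blast
  have rV: "r \<in> V" "u \<in> V" using DV[OF ctx] r uD by blast+
  let ?P = "\<lambda>x. x = u \<or> x = v \<or> E x u \<or> E x v"
  have "\<not> ?P r" using RF(2,4)[OF r] r by blast
  moreover have "E\<^sup>*\<^sup>* u r" using conn rV by blast
  ultimately obtain p q where pq0: "?P p" "\<not> ?P q" "E p q" using leaving_edge[of E u r ?P] by auto
  have puv: "p \<noteq> u" "p \<noteq> v" using pq0 es by blast+
  have pa: "E p u \<or> E p v" using pq0 puv by blast
  have qD: "q \<notin> D" using pq0 RF(5,6)[of q p] pa by blast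
  have qV: "q \<in> V" using ev pq0 by blast
  obtain z where z: "z \<in> D" "E q z" using sd qV qD unfolding semitotal_dom_def by blast
  have zuv: "z \<noteq> u" "z \<noteq> v" using z pq0 es by blast+
  obtain a where a: "a = u \<or> a = v" "E a p" using pa es by blast
  show ?thesis
  proof (cases "\<forall>y. E y v \<longrightarrow> y = u \<or> E y u")
    case True
    show ?thesis by (rule C1[OF ctx pq0(3) z(2) z(1) zuv pa puv True])
  next
    case Pv: False
    then obtain y0 where y0: "E y0 v" "y0 \<noteq> u" "\<not> E y0 u" by blast
    show ?thesis
    proof (cases "\<forall>y. E y u \<longrightarrow> y = v \<or> E y v")
      case True
      show ?thesis by (rule C1[OF ctx' pq0(3) z(2) z(1) zuv(2,1) _ puv(2,1) True]) (use pa in blast)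
    next
      case Pu: False
      then obtain y1 where y1: "E y1 u" "y1 \<noteq> v" "\<not> E y1 v" by blast
      show ?thesis
      proof (cases "\<exists>z1\<in>D - {u, v}. \<exists>z2\<in>D - {u, v}. within_two V E z1 z2 \<and> \<not> E z1 z2")
        case True
        then obtain z1 z2 where zz: "z1 \<in> D" "z1 \<noteq> u" "z1 \<noteq> v" "z2 \<in> D" "z2 \<noteq> u" "z2 \<noteq> v"
          "within_two V E z1 z2" "\<not> E z1 z2" by blast
        then obtain m where m: "m \<in> V" "E z1 m" "E m z2" unfolding within_two_def by blast
        have z12V: "z1 \<in> V" "z2 \<in> V" using zz DV[OF ctx] by blast+
        have dist: "distinct [z1, m, z2]" using zz(7) ir m unfolding within_two_def by auto
        have ip: "induced_P3 E z1 m z2" using dist m zz(8) unfolding induced_P3_def by blast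
        have mu: "\<not> E m u" "\<not> E m v" using RF(5,6)[OF zz(1-3) es[OF m(2)]] by auto
        have mne: "m \<noteq> u" "m \<noteq> v" using RF(2,4)[OF zz(1-3)] m(2) by blast+
        have hs: "\<forall>s\<in>{z1, m, z2}. \<not> E s a' \<and> \<not> E s b' \<and> s \<noteq> a' \<and> s \<noteq> b'"
          if "a' = u \<and> b' = v \<or> a' = v \<and> b' = u" for a' b'
          using that RF(2,4)[OF zz(1-3)] RF(2,4)[OF zz(4-6)] mu mne zz by auto
        have ht: "\<forall>s\<in>{z1, m, z2}. s \<noteq> m \<longrightarrow> \<not> E y s" if "E y u \<or> E y v" for y
          using that RF(5,6)[OF zz(1-3)] RF(5,6)[OF zz(4-6)] by auto
        have fv: "E y m" if "E y v" "y \<noteq> u" "\<not> E y u" for y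
          by (rule near_force[OF g free that(1) vu that(2,3) z12V(1) m(1) z12V(2) dist ip _ hs ht])
             (use that in auto)
        have fu: "E y m" if "E y u" "y \<noteq> v" "\<not> E y v" for y
          by (rule near_force[OF g free that(1) uv that(2,3) z12V(1) m(1) z12V(2) dist ip _ hs ht])
             (use that in auto)
        show ?thesis
          by (rule farfin[OF ctx m(1) mu zz(1-3) es[OF m(2)] y0 fv[OF y0]]) (use fu in blast)
      next
        case n1: False
        show ?thesis
        proof (cases "\<exists>z1\<in>D - {u, v}. \<exists>z2\<in>D - {u, v}. E z1 z2 \<and>
               (\<exists>w\<in>V - D. E w z1 \<and> \<not> (\<exists>d\<in>D. d \<noteq> z1 \<and> E w d))")
          case True
          then obtain z1 where z1: "z1 \<in> D - {u, v}" and
            ex: "\<exists>z2\<in>D - {u, v}. E z1 z2 \<and> (\<exists>w\<in>V - D. E w z1 \<and> \<not> (\<exists>d\<in>D. d \<noteq> z1 \<and> E w d))"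
            by blast
          from ex obtain z2 where z2: "z2 \<in> D - {u, v}" "E z1 z2"
            and ex2: "\<exists>w\<in>V - D. E w z1 \<and> \<not> (\<exists>d\<in>D. d \<noteq> z1 \<and> E w d)" by blast
          from ex2 obtain w where w0: "w \<in> V - D" "E w z1" "\<not> (\<exists>d\<in>D. d \<noteq> z1 \<and> E w d)" by blast
          have zz: "z1 \<in> D" "z1 \<noteq> u" "z1 \<noteq> v" "z2 \<in> D" "z2 \<noteq> u" "z2 \<noteq> v" "E z1 z2"
            using z1 z2 by auto
          have w: "w \<in> V" "w \<notin> D" "E w z1" "\<forall>d\<in>D. d \<noteq> z1 \<longrightarrow> \<not> E w d" using w0 by auto
          have z12V: "z1 \<in> V" "z2 \<in> V" using zz(1,4) DV[OF ctx] by blast+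
          have n12: "z1 \<noteq> z2" using ir[OF zz(7)] .
          have nw: "w \<noteq> z1" "w \<noteq> z2" using w(2) zz(1,4) by blast+
          have dist: "distinct [w, z1, z2]" using n12 nw by simp
          have wz2: "\<not> E w z2" using w(4) zz(4) n12 by metis
          have ip: "induced_P3 E w z1 z2" unfolding induced_P3_def using dist w(3) zz(7) wz2 by blast
          have wu: "\<not> E w u" "\<not> E w v" using w(4) uD vD zz(2,3) by metis+
          have wne: "w \<noteq> u" "w \<noteq> v" using w(2) uD vD by blast+
          have hs: "\<forall>s\<in>{w, z1, z2}. \<not> E s a' \<and> \<not> E s b' \<and> s \<noteq> a' \<and> s \<noteq> b'"
            if "a' = u \<and> b' = v \<or> a' = v \<and> b' = u" for a' b'
            using that RF(2,4)[OF zz(1-3)] RF(2,4)[OF zz(4-6)] wu wne zz by auto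
          have ht: "\<forall>s\<in>{w, z1, z2}. s \<noteq> w \<longrightarrow> \<not> E y s" if "E y u \<or> E y v" for y
            using that RF(5,6)[OF zz(1-3)] RF(5,6)[OF zz(4-6)] by auto
          have fv: "E y w" if "E y v" "y \<noteq> u" "\<not> E y u" for y
            by (rule near_force[OF g free that(1) vu that(2,3) w(1) z12V dist ip _ hs ht])
               (use that in auto)
          have fu: "E y w" if "E y u" "y \<noteq> v" "\<not> E y v" for y
            by (rule near_force[OF g free that(1) uv that(2,3) w(1) z12V dist ip _ hs ht])
               (use that in auto)
          show ?thesis
            by (rule farfin[OF ctx w(1) wu zz(1-3) w(3) y0 fv[OF y0]]) (use fu in blast)
        next
          case n2: False
          show ?thesis
          proof (rule sub3[OF ctx a pq0(3) z(2) qD z(1) zuv])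
            show "\<forall>z1\<in>D - {u, v}. \<forall>z2\<in>D - {u, v}. within_two V E z1 z2 \<longrightarrow> E z1 z2" using n1 by blast
            show "\<forall>z1\<in>D - {u, v}. \<forall>z2\<in>D - {u, v}. E z1 z2 \<longrightarrow>
               (\<forall>w\<in>V - D. E w z1 \<longrightarrow> (\<exists>d\<in>D. d \<noteq> z1 \<and> E w d))" using n2 by blast
          qed
        qed
      qed
    qed
  qed
qed

theorem lemma18:
  fixes V :: "'a set" and E :: "'a \<Rightarrow> 'a \<Rightarrow> bool"
  assumes "connected_graph V E"
    and "free_2P3 V E"
    and "gamma_t2 V E \<ge> 3"
  shows "ct_gamma_t2_le_1 V E \<longleftrightarrow> (\<exists>D. min_sds V E D \<and> \<not> independent E D)"
proof
  assume "ct_gamma_t2_le_1 V E"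
  then show "\<exists>D. min_sds V E D \<and> \<not> independent E D" using ct_imp assms(1,3) by blast
next
  assume "\<exists>D. min_sds V E D \<and> \<not> independent E D"
  then obtain D where sd: "semitotal_dom V E D" and cd: "card D = gamma_t2 V E"
    and ni: "\<not> independent E D" unfolding min_sds_def by blast
  obtain u v where uD: "u \<in> D" and vD: "v \<in> D" and uv: "E u v" using ni unfolding independent_def by blast
  have g: "graph V E" using assms(1) unfolding connected_graph_def by blast
  have conn: "\<forall>x\<in>V. \<forall>y\<in>V. E\<^sup>*\<^sup>* x y" using assms(1) unfolding connected_graph_def by blast
  have DV: "D \<subseteq> V" using sd unfolding semitotal_dom_def by blast
  have finD: "finite D" using DV graphD(1)[OF g] finite_subset by blast
  have uv': "u \<noteq> v" using graphD(5)[OF g] uv by metis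
  show "ct_gamma_t2_le_1 V E"
  proof (cases "\<exists>c\<in>D. c \<noteq> u \<and> c \<noteq> v \<and> (within_two V E u c \<or> within_two V E v c)")
    case True
    then obtain c where c: "c \<in> D" "c \<noteq> u" "c \<noteq> v" "within_two V E u c \<or> within_two V E v c" by blast
    show ?thesis by (rule caseA_ct[OF g sd cd uD vD c(1) uv c(2,3,4)])
  next
    case False
    then have cb: "\<forall>r\<in>D. r \<noteq> u \<longrightarrow> r \<noteq> v \<longrightarrow> \<not> within_two V E u r \<and> \<not> within_two V E v r" by blast
    have three: "\<exists>r\<in>D. r \<noteq> u \<and> r \<noteq> v"
    proof (rule ccontr)
      assume "\<not> ?thesis"
      then have "D \<subseteq> {u, v}" by blast
      then have "card D \<le> card {u, v}" by (rule card_mono[rotated]) simp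
      also have "\<dots> \<le> 2" by (simp add: card_insert_le_m1)
      finally show False using cd assms(3) by simp
    qed
    obtain D' where D': "goodD V E D'" "card D' = card D"
      using caseB[OF g sd finD uD vD uv cb conn assms(2) three] by blast
    then obtain a b c where abc: "a \<in> D'" "b \<in> D'" "c \<in> D'" "E a b" "c \<noteq> a" "c \<noteq> b"
      "within_two V E a c \<or> within_two V E b c" and sd': "semitotal_dom V E D'"
      unfolding goodD_def by blast
    show ?thesis by (rule caseA_ct[OF g sd' _ abc]) (use D'(2) cd in simp)
  qed
qed

end
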